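(* Fix an integer $n\ge 1$. For an integer $k$ with $-n\le k\le n$ put $r_{\min}^{(k)}=\left\lceil \frac{n+k}{2}\right\rceil$ and $r_{\max}^{(k)}=\min(n,n+k)$, and for $r_{\min}^{(k)}\le r\le r_{\max}^{(k)}$ define $$Q_{k,r}=\sum_{i=k+n-r}^{r}(-1)^i\binom{i-k+1}{n-r+1}\binom{n-i}{n-r}\,u_i\,u_{n+k-i}.$$ Then $Q_{k,r}$ is a nonzero element of $\mathcal Q_k$ of order $r$ (it involves $u_r$ but no $u_j$ with $j>r$), and it has deficiency $$m(k,r)=k+2\left(r-r_{\min}^{(k)}\right)$$ relative to $\mathcal P_n$, i.e. $Q_{k,r}(\mathcal P_n)\subset\mathcal P_{n-m(k,r)}$ but $Q_{k,r}(\mathcal P_n)\not\subset\mathcal P_{n-m(k,r)-1}$. Moreover $\{Q_{k,r}: r_{\min}^{(k)}\le r\le r_{\max}^{(k)}\}$ is a basis of $\mathcal Q_k$.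
   Context: Non-linear operators are identified with polynomial functions of jet variables: an element $P(x,u_0,\dots,u_n)\in\mathbb R[x,u_0,\dots,u_n]$ acts on a smooth function $f$ of one real variable by $P[f](x)=P(x,f(x),f'(x),\dots,f^{(n)}(x))$. For $s\ge 0$, $\mathcal P_s$ is the space of real polynomials in $x$ of degree at most $s$, and $\mathcal P_s=\{0\}$ for $s<0$. An operator $T$ has deficiency $m\in\mathbb Z$ relative to $\mathcal P_n$ if $T(\mathcal P_n)\subset\mathcal P_{n-m}$ but $T(\mathcal P_n)\not\subset\mathcal P_{n-m-1}$. For $-n\le k\le n$, $\mathcal Q_k$ is the real span of the monomials $u_iu_j$ with $i+j=n+k$, $0\le i,j\le n$ (the quadratic autonomous operators of "monomial deficiency" $k$). Binomial coefficients are $\binom{a}{i}=a(a-1)\cdots(a-i+1)/i!$ for $i\ge0$ and $0$ for $i<0$. *)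

theory Defs
  imports "HOL-Analysis.Analysis" "HOL-Computational_Algebra.Polynomial" "HOL-Library.Function_Algebras"
begin

text \<open>A (non-linear, autonomous) operator is identified with the function it induces on jet
  values: u (a function nat to real) stands for the jet variables u_0, u_1, ...
  (only u_0..u_n are ever used). Real polynomials are determined by their values, so this
  identification is faithful for the quadratic polynomials considered here.\<close>
type_synonym jetop = "(nat \<Rightarrow> real) \<Rightarrow> real"

definition act :: "jetop \<Rightarrow> (real \<Rightarrow> real) \<Rightarrow> real \<Rightarrow> real" where
  "act T f = (\<lambda>x. T (\<lambda>i. (deriv ^^ i) f x))"

definition inP :: "int \<Rightarrow> (real \<Rightarrow> real) \<Rightarrow> bool" where
  "inP s g \<longleftrightarrow> (\<exists>q :: real poly. g = poly q \<and> (if s < 0 then q = 0 else int (degree q) \<le> s))"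

definition has_deficiency :: "nat \<Rightarrow> jetop \<Rightarrow> int \<Rightarrow> bool" where
  "has_deficiency n T m \<longleftrightarrow>
     (\<forall>p :: real poly. degree p \<le> n \<longrightarrow> inP (int n - m) (act T (poly p))) \<and>
     \<not> (\<forall>p :: real poly. degree p \<le> n \<longrightarrow> inP (int n - m - 1) (act T (poly p)))"

definition involves :: "jetop \<Rightarrow> nat \<Rightarrow> bool" where
  "involves T j \<longleftrightarrow> (\<exists>u c. T (u(j := c)) \<noteq> T u)"

definition opscale :: "real \<Rightarrow> jetop \<Rightarrow> jetop" where
  "opscale c T = (\<lambda>u. c * T u)"

abbreviation opspan :: "jetop set \<Rightarrow> jetop set" where
  "opspan \<equiv> module.span opscale"

abbreviation opdependent :: "jetop set \<Rightarrow> bool" where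
  "opdependent \<equiv> module.dependent opscale"

definition Qspace :: "nat \<Rightarrow> int \<Rightarrow> jetop set" where
  "Qspace n k = opspan {(\<lambda>u. u i * u j) | i j. i \<le> n \<and> j \<le> n \<and> int i + int j = int n + k}"

definition rmin :: "nat \<Rightarrow> int \<Rightarrow> int" where
  "rmin n k = \<lceil>real_of_int (int n + k) / 2\<rceil>"

definition rmax :: "nat \<Rightarrow> int \<Rightarrow> int" where
  "rmax n k = min (int n) (int n + k)"

definition Qkr :: "nat \<Rightarrow> int \<Rightarrow> int \<Rightarrow> jetop" where
  "Qkr n k r = (\<lambda>u. \<Sum>i\<in>{k + int n - r .. r}.
      (-1) powi i * ((of_int (i - k + 1) :: real) gchoose nat (int n - r + 1))
        * ((of_int (int n - i) :: real) gchoose nat (int n - r))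
        * u (nat i) * u (nat (int n + k - i)))"

end

theory Submission
  imports Defs
begin


primrec FD :: "nat \<Rightarrow> (real \<Rightarrow> real) \<Rightarrow> real \<Rightarrow> real" where
  "FD 0 f x = f x"
| "FD (Suc e) f x = FD e f x - FD e f (x - 1)"

lemma FD_diff: "FD e (\<lambda>y. f y - g y) x = FD e f x - FD e g x"
  by (induction e arbitrary: x) auto

lemma FD_add: "FD e (\<lambda>y. f y + g y) x = FD e f x + FD e g x"
  by (induction e arbitrary: x) auto

lemma FD_cmult: "FD e (\<lambda>y. c * f y) x = c * FD e f x"
  by (induction e arbitrary: x) (auto simp: algebra_simps)

lemma FD_shift: "FD e (\<lambda>y. f (y + c)) x = FD e f (x + c)"
  by (induction e arbitrary: x) (auto simp: algebra_simps)

lemma FD_cong: "(\<And>y. f y = g y) \<Longrightarrow> FD e f x = FD e g x"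
  by (metis ext)

lemma FD_Suc': "FD (Suc e) f x = FD e (\<lambda>y. f y - f (y - 1)) x"
proof -
  have "FD e (\<lambda>y. f (y + (-1))) x = FD e f (x + (-1))" by (rule FD_shift)
  then show ?thesis by (simp add: FD_diff)
qed

lemma FD_zero_pts: "(\<forall>q\<in>{1..e}. f (x - real q) = 0) \<Longrightarrow> FD e f x = f x"
proof (induction e arbitrary: x)
  case 0 then show ?case by simp
next
  case (Suc e)
  have a: "FD e f x = f x" using Suc by auto
  have "\<forall>q\<in>{1..e}. f (x - 1 - real q) = 0"
  proof
    fix q assume "q \<in> {1..e}"
    then have "Suc q \<in> {1..Suc e}" by auto
    then have "f (x - real (Suc q)) = 0" using Suc.prems by blast
    then show "f (x - 1 - real q) = 0" by (simp add: algebra_simps)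
  qed
  then have b: "FD e f (x - 1) = f (x - 1)" using Suc.IH by blast
  have "f (x - 1) = 0" using Suc.prems[rule_format, of 1] by simp
  then show ?case using a b by simp
qed

lemma FD_refl: "FD e (\<lambda>y. f (c - y)) x = (-1)^e * FD e f (c - x + real e)"
proof (induction e arbitrary: x)
  case 0 then show ?case by simp
next
  case (Suc e)
  have "FD (Suc e) (\<lambda>y. f (c - y)) x = (-1)^e * FD e f (c - x + real e) - (-1)^e * FD e f (c - (x - 1) + real e)"
    using Suc by simp
  also have "\<dots> = (-1)^(Suc e) * (FD e f (c - x + real (Suc e)) - FD e f (c - x + real (Suc e) - 1))"
    by (simp add: algebra_simps)
  also have "\<dots> = (-1)^(Suc e) * FD (Suc e) f (c - x + real (Suc e))" by simp
  finally show ?case .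
qed

definition dpoly :: "real poly \<Rightarrow> real poly" where
  "dpoly p = p - p \<circ>\<^sub>p [:-1, 1:]"

lemma poly_dpoly: "poly (dpoly p) y = poly p y - poly p (y - 1)"
  by (simp add: dpoly_def poly_pcompose)

lemma dpoly_coeff_vanish:
  assumes "\<forall>i\<ge>Suc e. coeff p i = 0"
  shows "\<forall>i\<ge>e. coeff (dpoly p) i = 0"
proof (cases "degree p = 0")
  case True
  then obtain c where "p = [:c:]" by (metis degree_eq_zeroE)
  then have "dpoly p = 0" by (simp add: dpoly_def)
  then show ?thesis by simp
next
  case False
  have dq: "degree [:-1, 1::real:] = 1" by simp
  have d1: "degree (p \<circ>\<^sub>p [:-1, 1:]) = degree p" by (simp add: degree_pcompose)
  have l1: "lead_coeff (p \<circ>\<^sub>p [:-1, 1:]) = lead_coeff p"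
    using lead_coeff_comp[of "[:-1, 1::real:]" p] by simp
  have dd: "degree (dpoly p) \<le> degree p"
    unfolding dpoly_def using degree_diff_le[of p "degree p" "p \<circ>\<^sub>p [:-1, 1:]"] d1 by simp
  have c0: "coeff (dpoly p) (degree p) = 0"
    unfolding dpoly_def using l1 d1 by simp
  have de: "degree p \<le> e"
  proof (rule ccontr)
    assume "\<not> degree p \<le> e"
    then have "coeff p (degree p) = 0" using assms by auto
    then show False using False by (metis degree_0 leading_coeff_0_iff)
  qed
  show ?thesis
  proof (intro allI impI)
    fix i assume "e \<le> i"
    show "coeff (dpoly p) i = 0"
    proof (cases "i = degree p")
      case True then show ?thesis using c0 by simp
    next
      case False
      then have "i > degree (dpoly p)" using dd de \<open>e \<le> i\<close> by linarith
      then show ?thesis by (simp add: coeff_eq_0)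
    qed
  qed
qed

lemma FD0: "(\<forall>i\<ge>e. coeff p i = 0) \<Longrightarrow> FD e (poly p) x = 0"
proof (induction e arbitrary: p x)
  case 0
  then have "p = 0" by (intro poly_eqI) simp
  then show ?case by simp
next
  case (Suc e)
  have "FD (Suc e) (poly p) x = FD e (\<lambda>y. poly p y - poly p (y - 1)) x" by (rule FD_Suc')
  also have "\<dots> = FD e (poly (dpoly p)) x" by (rule FD_cong) (simp add: poly_dpoly)
  also have "\<dots> = 0" using Suc.IH dpoly_coeff_vanish[OF Suc.prems] by blast
  finally show ?case .
qed

definition ffpoly :: "nat \<Rightarrow> real poly" where
  "ffpoly e = (\<Prod>i\<in>{0..<e}. [:- of_nat i, 1:])"

lemma poly_ffpoly: "poly (ffpoly e) x = (\<Prod>i\<in>{0..<e}. x - of_nat i)"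
  by (simp add: ffpoly_def poly_prod)

lemma degree_ffpoly: "degree (ffpoly e) = e"
  unfolding ffpoly_def by (subst degree_prod_sum_eq) auto

lemma coeff_ffpoly: "coeff (ffpoly e) e = 1"
proof -
  have "lead_coeff (ffpoly e) = 1" unfolding ffpoly_def by (simp add: lead_coeff_prod)
  then show ?thesis using degree_ffpoly by simp
qed

lemma FD_ffpoly: "FD e (poly (ffpoly e)) (real e) = fact e"
proof -
  have "\<forall>q\<in>{1..e}. poly (ffpoly e) (real e - real q) = 0"
  proof
    fix q assume q: "q \<in> {1..e}"
    then have "e - q \<in> {0..<e}" by auto
    moreover have "real e - real q - real (e - q) = 0" using q by auto
    ultimately show "poly (ffpoly e) (real e - real q) = 0"
      unfolding poly_ffpoly by (metis (no_types, lifting) finite_atLeastLessThan prod_zero_iff)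
  qed
  then have "FD e (poly (ffpoly e)) (real e) = poly (ffpoly e) (real e)" by (rule FD_zero_pts)
  also have "\<dots> = (\<Prod>i\<in>{0..<e}. real (e - i))" unfolding poly_ffpoly
    by (intro prod.cong) auto
  also have "\<dots> = fact e"
  proof -
    have "(\<Prod>i\<in>{0..<e}. real (e - i)) = (\<Prod>i\<in>{1..e}. real i)"
      by (rule prod.reindex_bij_witness[where i="\<lambda>j. e - j" and j="\<lambda>i. e - i"]) auto
    then show ?thesis by (simp add: fact_prod)
  qed
  finally show ?thesis .
qed

lemma FDval:
  assumes "degree p \<le> e"
  shows "FD e (poly p) x = fact e * coeff p e"
proof -
  define g where "g = p \<circ>\<^sub>p [:x - real e, 1:]"
  have pg: "poly g y = poly p (y + (x - real e))" for y by (simp add: g_def poly_pcompose algebra_simps)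
  have "FD e (poly p) x = FD e (\<lambda>y. poly p (y + (x - real e))) (real e)"
    using FD_shift[of e "poly p" "x - real e" "real e"] by simp
  also have "\<dots> = FD e (poly g) (real e)" using pg by (intro FD_cong) simp
  finally have eq1: "FD e (poly p) x = FD e (poly g) (real e)" .
  have dg: "degree g = degree p" by (simp add: g_def degree_pcompose)
  have cg: "coeff g e = coeff p e"
  proof (cases "degree p = e")
    case True
    then show ?thesis using lead_coeff_comp[of "[:x - real e, 1:]" p] dg by (simp add: g_def)
  next
    case False
    then have "degree p < e" using assms by simp
    then show ?thesis using dg by (simp add: coeff_eq_0)
  qed
  define h where "h = g - smult (coeff g e) (ffpoly e)"
  have hc: "\<forall>i\<ge>e. coeff h i = 0"
  proof (intro allI impI)
    fix i assume "e \<le> i"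
    show "coeff h i = 0"
    proof (cases "i = e")
      case True then show ?thesis by (simp add: h_def coeff_ffpoly)
    next
      case False
      then have "i > degree g" "i > degree (ffpoly e)" using \<open>e \<le> i\<close> dg assms degree_ffpoly by auto
      then show ?thesis by (simp add: h_def coeff_eq_0)
    qed
  qed
  have "poly g y = coeff g e * poly (ffpoly e) y + poly h y" for y by (simp add: h_def)
  then have "FD e (poly g) (real e) = FD e (\<lambda>y. coeff g e * poly (ffpoly e) y + poly h y) (real e)"
    by (intro FD_cong) simp
  also have "\<dots> = coeff g e * fact e"
    by (simp add: FD_add FD_cmult FD_ffpoly FD0[OF hc])
  finally show ?thesis using eq1 cg by simp
qed


definition G :: "nat \<Rightarrow> real poly" where
  "G k = smult (1 / fact k) (ffpoly k)"

lemma poly_G: "poly (G k) x = x gchoose k"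
  by (simp add: G_def poly_ffpoly gbinomial_prod_rev)

lemma G_nz: "G k \<noteq> 0"
proof -
  have "coeff (G k) k = 1 / fact k" by (simp add: G_def coeff_ffpoly)
  then show ?thesis by auto
qed

lemma degree_G: "degree (G k) = k"
  by (simp add: G_def degree_ffpoly)

lemma lin_comp_props:
  fixes g :: "real poly" and b c :: real
  assumes "g \<noteq> 0" "c \<noteq> 0"
  shows "g \<circ>\<^sub>p [:b, c:] \<noteq> 0" "degree (g \<circ>\<^sub>p [:b, c:]) = degree g"
proof -
  have dq: "degree [:b, c:] = 1" using assms by simp
  show "g \<circ>\<^sub>p [:b, c:] \<noteq> 0" using pcompose_eq_0_iff[of "[:b, c:]" g] dq assms by simp
  show "degree (g \<circ>\<^sub>p [:b, c:]) = degree g" by (simp only: degree_pcompose dq)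
qed

definition Pp :: "nat \<Rightarrow> nat \<Rightarrow> real poly" where
  "Pp s L = (G (Suc s) \<circ>\<^sub>p [:real s + 1, 1:]) * (G s \<circ>\<^sub>p [:real L + real s, -1:])"

definition Sp :: "nat \<Rightarrow> nat \<Rightarrow> real poly" where
  "Sp s L = (G s \<circ>\<^sub>p [:real s, 1:]) * (G s \<circ>\<^sub>p [:real L + real s, -1:])"

lemma poly_Pp: "poly (Pp s L) x = (x + real s + 1 gchoose Suc s) * (real L + real s - x gchoose s)"
  by (simp add: Pp_def poly_pcompose poly_G algebra_simps)

lemma poly_Sp: "poly (Sp s L) x = (x + real s gchoose s) * (real L + real s - x gchoose s)"
  by (simp add: Sp_def poly_pcompose poly_G algebra_simps)

lemma Pp_props: "Pp s L \<noteq> 0" "degree (Pp s L) = Suc (2 * s)"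
proof -
  have a: "G (Suc s) \<circ>\<^sub>p [:real s + 1, 1:] \<noteq> 0" "degree (G (Suc s) \<circ>\<^sub>p [:real s + 1, 1:]) = Suc s"
    using lin_comp_props[OF G_nz, of 1 "Suc s" "real s + 1"] degree_G by auto
  have b: "G s \<circ>\<^sub>p [:real L + real s, -1:] \<noteq> 0" "degree (G s \<circ>\<^sub>p [:real L + real s, -1:]) = s"
    using lin_comp_props[OF G_nz, of "-1" s "real L + real s"] degree_G by auto
  show "Pp s L \<noteq> 0" using a b by (simp add: Pp_def)
  show "degree (Pp s L) = Suc (2 * s)" using a b by (simp add: Pp_def degree_mult_eq)
qed

lemma Sp_props: "Sp s L \<noteq> 0" "degree (Sp s L) = 2 * s"
proof -
  have a: "G s \<circ>\<^sub>p [:real s, 1:] \<noteq> 0" "degree (G s \<circ>\<^sub>p [:real s, 1:]) = s"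
    using lin_comp_props[OF G_nz, of 1 "s" "real s"] degree_G by auto
  have b: "G s \<circ>\<^sub>p [:real L + real s, -1:] \<noteq> 0" "degree (G s \<circ>\<^sub>p [:real L + real s, -1:]) = s"
    using lin_comp_props[OF G_nz, of "-1" s "real L + real s"] degree_G by auto
  show "Sp s L \<noteq> 0" using a b by (simp add: Sp_def)
  show "degree (Sp s L) = 2 * s" using a b by (simp add: Sp_def degree_mult_eq)
qed

lemma Pp_Sp: "poly (Pp s L) x = (x + real s + 1) / (real s + 1) * poly (Sp s L) x"
proof -
  have "of_nat (Suc s) * ((x + real s + 1) gchoose Suc s) = (x + real s + 1) * ((x + real s + 1 - 1) gchoose s)"
    by (rule gbinomial_absorption)
  then have "((x + real s + 1) gchoose Suc s) = (x + real s + 1) / (real s + 1) * ((x + real s) gchoose s)"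
    by (simp add: field_simps)
  then show ?thesis by (simp add: poly_Pp poly_Sp)
qed

lemma FD_Pp_odd: "FD (Suc (2 * s)) (poly (Pp s L)) x \<noteq> 0"
proof -
  have "coeff (Pp s L) (Suc (2 * s)) \<noteq> 0" using Pp_props by (metis leading_coeff_0_iff)
  moreover have "FD (Suc (2 * s)) (poly (Pp s L)) x = fact (Suc (2 * s)) * coeff (Pp s L) (Suc (2 * s))"
    using FDval[of "Pp s L" "Suc (2 * s)" x] Pp_props by (simp del: FD.simps)
  ultimately show ?thesis by (simp del: FD.simps)
qed

lemma FD_Pp_over: "FD (Suc (Suc (2 * s))) (poly (Pp s L)) x = 0"
  using FDval[of "Pp s L" "Suc (Suc (2 * s))" x] Pp_props by (simp add: coeff_eq_0 del: FD.simps)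

lemma FD_Pp_const: "FD (Suc (2 * s)) (poly (Pp s L)) x = FD (Suc (2 * s)) (poly (Pp s L)) y"
  using FDval[of "Pp s L" "Suc (2 * s)"] Pp_props by (simp del: FD.simps)

lemma FD_Pp_center:
  assumes "even L"
  shows "FD (2 * s) (poly (Pp s L)) (real L / 2 + real s) \<noteq> 0"
proof -
  define c where "c = real L / 2"
  define f where "f = (\<lambda>y. (y - c) * poly (Sp s L) y)"
  have sym: "poly (Sp s L) (real L - y) = poly (Sp s L) y" for y
    by (simp add: poly_Sp algebra_simps)
  have fodd: "f (real L - y) = - f y" for y
    by (simp add: f_def sym c_def algebra_simps)
  have "FD (2 * s) (\<lambda>y. f (real L - y)) (c + real s) = (-1)^(2 * s) * FD (2 * s) f (real L - (c + real s) + real (2 * s))"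
    by (rule FD_refl)
  also have "real L - (c + real s) + real (2 * s) = c + real s" by (simp add: c_def)
  finally have "FD (2 * s) (\<lambda>y. - f y) (c + real s) = FD (2 * s) f (c + real s)"
    using fodd by simp
  moreover have "FD (2 * s) (\<lambda>y. - f y) (c + real s) = - FD (2 * s) f (c + real s)"
    using FD_cmult[of "2 * s" "-1" f] by simp
  ultimately have F0: "FD (2 * s) f (c + real s) = 0" by simp
  have "poly (Pp s L) y = (c + real s + 1) / (real s + 1) * poly (Sp s L) y + (1 / (real s + 1)) * f y" for y
  proof -
    have "poly (Pp s L) y = ((c + real s + 1) + (y - c)) / (real s + 1) * poly (Sp s L) y"
      by (simp add: Pp_Sp)
    then show ?thesis by (simp add: f_def add_divide_distrib ring_distribs)
  qed
  then have "FD (2 * s) (poly (Pp s L)) (c + real s)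
     = FD (2 * s) (\<lambda>y. (c + real s + 1) / (real s + 1) * poly (Sp s L) y + (1 / (real s + 1)) * f y) (c + real s)"
    by (intro FD_cong) simp
  also have "\<dots> = (c + real s + 1) / (real s + 1) * FD (2 * s) (poly (Sp s L)) (c + real s)"
    by (simp only: FD_add FD_cmult F0)
  also have "\<dots> = (c + real s + 1) / (real s + 1) * (fact (2 * s) * coeff (Sp s L) (2 * s))"
    using FDval[of "Sp s L" "2 * s"] Sp_props by simp
  finally have eq: "FD (2 * s) (poly (Pp s L)) (c + real s) = (c + real s + 1) / (real s + 1) * (fact (2 * s) * coeff (Sp s L) (2 * s))" .
  have "coeff (Sp s L) (2 * s) \<noteq> 0" using Sp_props by (metis leading_coeff_0_iff)
  moreover have "c + real s + 1 > 0" by (simp add: c_def)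
  ultimately show ?thesis using eq by (simp add: c_def)
qed


lemma pderiv_sum': "pderiv (sum f A) = (\<Sum>x\<in>A. pderiv (f x))"
  by (induction A rule: infinite_finite_induct) (simp_all add: pderiv_add)

definition Phi :: "(int \<Rightarrow> real) \<Rightarrow> nat \<Rightarrow> real poly \<Rightarrow> real poly" where
  "Phi W M p = (\<Sum>j\<le>M. smult (W (int j)) ((pderiv ^^ j) p * (pderiv ^^ (M - j)) p))"

lemma PhiD:
  assumes "W (-1) = 0" "W (int M + 1) = 0"
  shows "pderiv (Phi W M p) = Phi (\<lambda>i. W i + W (i - 1)) (Suc M) p"
proof -
  define fa where "fa j = (pderiv ^^ j) p" for j
  have fs: "pderiv (fa j) = fa (Suc j)" for j by (simp add: fa_def)
  have "pderiv (Phi W M p) = (\<Sum>j\<le>M. smult (W (int j)) (fa j * fa (Suc (M - j)))) + (\<Sum>j\<le>M. smult (W (int j)) (fa (Suc j) * fa (M - j)))"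
    unfolding Phi_def fa_def[symmetric] pderiv_sum'
    by (simp add: pderiv_smult pderiv_mult fs sum.distrib[symmetric] smult_add_right algebra_simps)
  also have "(\<Sum>j\<le>M. smult (W (int j)) (fa j * fa (Suc (M - j)))) = (\<Sum>j\<le>Suc M. smult (W (int j)) (fa j * fa (Suc M - j)))"
    using assms(2) by (simp add: Suc_diff_le add.commute)
  also have "(\<Sum>j\<le>M. smult (W (int j)) (fa (Suc j) * fa (M - j))) = (\<Sum>j\<le>Suc M. smult (W (int j - 1)) (fa j * fa (Suc M - j)))"
    using assms(1) by (simp add: sum.atMost_Suc_shift del: sum.atMost_Suc)
  also have "(\<Sum>j\<le>Suc M. smult (W (int j)) (fa j * fa (Suc M - j))) + (\<Sum>j\<le>Suc M. smult (W (int j - 1)) (fa j * fa (Suc M - j)))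
      = Phi (\<lambda>i. W i + W (i - 1)) (Suc M) p"
    unfolding Phi_def fa_def by (simp add: sum.distrib[symmetric] smult_add_left)
  finally show ?thesis .
qed

primrec Wseq :: "nat \<Rightarrow> (int \<Rightarrow> real) \<Rightarrow> int \<Rightarrow> real" where
  "Wseq 0 c i = c i"
| "Wseq (Suc e) c i = Wseq e c i + Wseq e c (i - 1)"

lemma Wseq_supp:
  assumes "\<And>i. i < lo \<or> hi < i \<Longrightarrow> c i = 0"
  shows "i < lo \<or> hi + int e < i \<Longrightarrow> Wseq e c i = 0"
proof (induction e arbitrary: i)
  case 0 then show ?case using assms by simp
next
  case (Suc e)
  have "i - 1 < lo \<or> hi + int e < i - 1" using Suc.prems by auto
  moreover have "i < lo \<or> hi + int e < i" using Suc.prems by auto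
  ultimately show ?case using Suc.IH by simp
qed

lemma minus_one_powi_pred: "(-1::real) powi (i - 1) = - ((-1) powi i)"
  by (simp add: power_int_diff)

lemma Wseq_window:
  assumes "\<And>i. lo \<le> i \<Longrightarrow> i \<le> hi \<Longrightarrow> c i = (-1) powi i * g (of_int i)"
  shows "lo + int e \<le> i \<Longrightarrow> i \<le> hi \<Longrightarrow> Wseq e c i = (-1) powi i * FD e g (of_int i)"
proof (induction e arbitrary: i)
  case 0 then show ?case using assms by simp
next
  case (Suc e)
  have a: "Wseq e c i = (-1) powi i * FD e g (of_int i)" using Suc by simp
  have b: "Wseq e c (i - 1) = (-1) powi (i - 1) * FD e g (of_int (i - 1))" using Suc by simp
  show ?case using a b by (simp add: minus_one_powi_pred algebra_simps)
qed

lemma Phi_iter: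
  assumes "\<And>i. i < lo \<or> hi < i \<Longrightarrow> c i = 0" "0 \<le> lo" "hi \<le> int N"
  shows "(pderiv ^^ e) (Phi c N p) = Phi (Wseq e c) (N + e) p"
proof (induction e)
  case 0
  have "Wseq 0 c = c" by (rule ext) simp
  then show ?case by simp
next
  case (Suc e)
  have w1: "Wseq e c (-1) = 0" using Wseq_supp[OF assms(1)] assms(2) by simp
  have w2: "Wseq e c (int (N + e) + 1) = 0" using Wseq_supp[OF assms(1)] assms(3) by simp
  have ext1: "(\<lambda>i. Wseq e c i + Wseq e c (i - 1)) = Wseq (Suc e) c" by (rule ext) simp
  show ?case using Suc PhiD[OF w1 w2, of p] ext1 by simp
qed

lemma hpd_zero:
  fixes p :: "real poly"
  assumes "degree p < j"
  shows "(pderiv ^^ j) p = 0"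
proof (rule poly_eqI)
  fix i
  have "coeff p (i + j) = 0" using assms by (intro coeff_eq_0) simp
  then show "coeff ((pderiv ^^ j) p) i = coeff 0 i" by (simp add: coeff_higher_pderiv)
qed

lemma hpd_nonzero_degree:
  fixes R :: "real poly"
  assumes "(pderiv ^^ j) R \<noteq> 0"
  shows "j \<le> degree R"
  using hpd_zero assms by (meson not_le)

lemma hpd_zero_degree:
  fixes R :: "real poly"
  assumes "(pderiv ^^ j) R = 0" "R \<noteq> 0"
  shows "degree R < j"
proof (rule ccontr)
  assume "\<not> degree R < j"
  then have "j \<le> degree R" by simp
  have "coeff ((pderiv ^^ j) R) (degree R - j) = pochhammer (of_nat (Suc (degree R - j))) j * coeff R (degree R)"
    using \<open>j \<le> degree R\<close> by (simp add: coeff_higher_pderiv)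
  moreover have "pochhammer (of_nat (Suc (degree R - j)) :: real) j > 0" by (intro pochhammer_pos) simp
  moreover have "coeff R (degree R) \<noteq> 0" using assms(2) by simp
  ultimately have "coeff ((pderiv ^^ j) R) (degree R - j) \<noteq> 0" by simp
  then show False using assms(1) by simp
qed

lemma PhiVan:
  fixes p :: "real poly"
  assumes "degree p \<le> n"
    and "\<And>j. j \<le> M \<Longrightarrow> j \<le> n \<Longrightarrow> M - j \<le> n \<Longrightarrow> W (int j) + W (int (M - j)) = 0"
  shows "Phi W M p = 0"
proof -
  define fa where "fa j = (pderiv ^^ j) p" for j
  have fz: "j > n \<Longrightarrow> fa j = 0" for j unfolding fa_def using assms(1) by (intro hpd_zero) simp
  have "Phi W M p = (\<Sum>j\<le>M. smult (W (int j)) (fa j * fa (M - j)))" by (simp add: Phi_def fa_def)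
  also have "\<dots> = (\<Sum>j\<le>M. smult (W (int (M - j))) (fa (M - j) * fa (M - (M - j))))"
    by (rule sum.reindex_bij_witness[where i="\<lambda>j. M - j" and j="\<lambda>j. M - j"]) auto
  also have "\<dots> = (\<Sum>j\<le>M. smult (W (int (M - j))) (fa j * fa (M - j)))"
    by (intro sum.cong) (auto simp: mult.commute)
  finally have e2: "Phi W M p = (\<Sum>j\<le>M. smult (W (int (M - j))) (fa j * fa (M - j)))" .
  have "Phi W M p + Phi W M p = (\<Sum>j\<le>M. smult (W (int j) + W (int (M - j))) (fa j * fa (M - j)))"
    by (subst (2) e2) (simp add: Phi_def fa_def sum.distrib[symmetric] smult_add_left)
  also have "\<dots> = 0"
  proof (intro sum.neutral ballI)
    fix j assume "j \<in> {..M}"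
    show "smult (W (int j) + W (int (M - j))) (fa j * fa (M - j)) = 0"
    proof (cases "j \<le> n \<and> M - j \<le> n")
      case True then show ?thesis using assms(2) \<open>j \<in> {..M}\<close> by simp
    next
      case False then show ?thesis using fz by auto
    qed
  qed
  finally show ?thesis by simp
qed

lemma deriv_poly_fun: "deriv (poly q) = poly (pderiv q)"
  by (rule ext) (rule DERIV_imp_deriv[OF poly_DERIV])

lemma hderiv_poly: "(deriv ^^ i) (poly p) = poly ((pderiv ^^ i) p)"
  by (induction i) (simp_all add: deriv_poly_fun)

lemma inP_poly: "inP d (poly R) \<longleftrightarrow> (if d < 0 then R = 0 else int (degree R) \<le> d)"
  unfolding inP_def by (auto simp: poly_eq_poly_eq_iff)


lemma gz: "m < K \<Longrightarrow> (real m gchoose K) = 0"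
  using binomial_gbinomial[of m K, where 'a = real] by (simp add: binomial_eq_0)

definition cf :: "nat \<Rightarrow> int \<Rightarrow> int \<Rightarrow> int \<Rightarrow> real" where
  "cf n k r i = (-1) powi i * ((of_int (i - k + 1) :: real) gchoose nat (int n - r + 1))
        * ((of_int (int n - i) :: real) gchoose nat (int n - r))"

lemma Qkr_cf: "Qkr n k r u = (\<Sum>i\<in>{k + int n - r .. r}. cf n k r i * u (nat i) * u (nat (int n + k - i)))"
  by (simp add: Qkr_def cf_def)

definition chat :: "nat \<Rightarrow> int \<Rightarrow> int \<Rightarrow> int \<Rightarrow> real" where
  "chat n k r i = (if k + int n - r \<le> i \<and> i \<le> r then cf n k r i else 0)"

lemma chat_Pp:
  fixes a L s :: nat and i :: int
  assumes "int a - int s - 1 \<le> i" "i \<le> int (a + L + s)"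
  shows "chat (a+L+s) (int a - int s) (int (a+L)) i = (-1) powi i * poly (Pp s L) (of_int i - real a)"
proof -
  have n1: "nat (int (a+L+s) - int (a+L) + 1) = Suc s" by simp
  have n2: "nat (int (a+L+s) - int (a+L)) = s" by simp
  have lo: "int a - int s + int (a+L+s) - int (a+L) = int a" by simp
  have e1: "(of_int (i - (int a - int s) + 1) :: real) = of_int i - real a + real s + 1" by simp
  have e2: "(of_int (int (a+L+s) - i) :: real) = real L + real s - (of_int i - real a)" by simp
  have ch: "chat (a+L+s) (int a - int s) (int (a+L)) i = (if int a \<le> i \<and> i \<le> int (a+L) then
      (-1) powi i * ((of_int i - real a + real s + 1) gchoose Suc s) * ((real L + real s - (of_int i - real a)) gchoose s) else 0)"
    unfolding chat_def cf_def n1 n2 lo e1 e2 by simp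
  show ?thesis
  proof (cases "int a \<le> i \<and> i \<le> int (a+L)")
    case True then show ?thesis unfolding ch by (simp add: poly_Pp)
  next
    case False
    then consider "i < int a" | "int (a + L) < i" by linarith
    then show ?thesis
    proof cases
      case 1
      define m where "m = nat (i - int a + int s + 1)"
      have "real m = of_int i - real a + real s + 1" unfolding m_def using 1 assms by simp
      moreover have "m < Suc s" unfolding m_def using 1 by simp
      ultimately have "(of_int i - real a + real s + 1) gchoose Suc s = 0" using gz by metis
      then show ?thesis using False unfolding ch by (simp add: poly_Pp)
    next
      case 2
      define m where "m = nat (int (a + L + s) - i)"
      have "real m = real L + real s - (of_int i - real a)" unfolding m_def using 2 assms by simp
      moreover have "m < s" unfolding m_def using 2 assms by (simp add: nat_less_iff)
      ultimately have "(real L + real s - (of_int i - real a)) gchoose s = 0" using gz by metis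
      then show ?thesis using False unfolding ch by (simp add: poly_Pp)
    qed
  qed
qed

lemma act_Q:
  fixes a L s :: nat
  shows "act (Qkr (a+L+s) (int a - int s) (int (a+L))) (poly p)
       = poly (Phi (chat (a+L+s) (int a - int s) (int (a+L))) (2*a+L) p)"
proof (rule ext)
  fix x
  define F where "F j = poly ((pderiv ^^ j) p) x" for j
  define c where "c = cf (a+L+s) (int a - int s) (int (a+L))"
  have lo: "int a - int s + int (a+L+s) - int (a+L) = int a" by simp
  have "act (Qkr (a+L+s) (int a - int s) (int (a+L))) (poly p) x
      = (\<Sum>i\<in>{int a .. int (a+L)}. c i * F (nat i) * F (nat (int (a+L+s) + (int a - int s) - i)))"
    unfolding act_def Qkr_cf hderiv_poly lo c_def F_def by simp
  also have "\<dots> = (\<Sum>j\<in>{a..a+L}. c (int j) * F j * F (2*a+L-j))"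
  proof -
    have nn: "nat (2 * int a + int L - aa) = 2*a+L - nat aa" if "int a \<le> aa" "aa \<le> int a + int L" for aa
      using that by linarith
    show ?thesis by (rule sum.reindex_bij_witness[where i="int" and j="nat"]) (auto simp: nn)
  qed
  also have "\<dots> = (\<Sum>j\<le>2*a+L. chat (a+L+s) (int a - int s) (int (a+L)) (int j) * (F j * F (2*a+L-j)))"
    by (rule sum.mono_neutral_cong_left) (auto simp: chat_def c_def)
  also have "\<dots> = poly (Phi (chat (a+L+s) (int a - int s) (int (a+L))) (2*a+L) p) x"
    by (simp add: Phi_def poly_sum F_def)
  finally show "act (Qkr (a+L+s) (int a - int s) (int (a+L))) (poly p) x = poly (Phi (chat (a+L+s) (int a - int s) (int (a+L))) (2*a+L) p) x" .
qed

lemma hpd_monom_self: "(pderiv ^^ m) (monom (1::real) m) = [:fact m:]"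
proof (rule poly_eqI)
  fix i
  show "coeff ((pderiv ^^ m) (monom (1::real) m)) i = coeff [:fact m:] i"
    by (cases i) (simp_all add: coeff_higher_pderiv coeff_monom pochhammer_fact)
qed

lemma PhiMonom: "Phi W (2*m) (monom (1::real) m) = smult (W (int m)) ([:fact m:] * [:fact m:])"
proof -
  define fa where "fa j = (pderiv ^^ j) (monom (1::real) m)" for j
  have fz: "j > m \<Longrightarrow> fa j = 0" for j unfolding fa_def by (intro hpd_zero) (simp add: degree_monom_eq)
  have "Phi W (2*m) (monom 1 m) = (\<Sum>j\<le>2*m. if j = m then smult (W (int m)) (fa m * fa m) else 0)"
    unfolding Phi_def fa_def[symmetric]
  proof (intro sum.cong refl)
    fix j assume "j \<in> {..2*m}"
    show "smult (W (int j)) (fa j * fa (2 * m - j)) = (if j = m then smult (W (int m)) (fa m * fa m) else 0)"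
    proof (cases "j = m")
      case True then show ?thesis by (simp add: mult_2)
    next
      case False
      then have "j > m \<or> 2*m - j > m" by auto
      then show ?thesis using fz False by auto
    qed
  qed
  also have "\<dots> = smult (W (int m)) (fa m * fa m)" by simp
  finally show ?thesis by (simp add: fa_def hpd_monom_self)
qed


lemma neg1_pow_compl:
  assumes "j \<le> M" "odd M"
  shows "(-1::real) ^ (M - j) = - ((-1) ^ j)"
proof -
  have "(-1::real) ^ (M - j) * (-1) ^ j = (-1) ^ M" using assms by (simp add: power_add[symmetric])
  then have "(-1::real) ^ (M - j) * (-1) ^ j = -1" using assms by simp
  then show ?thesis by (cases "even j") auto
qed

theorem core_def:
  fixes a L s :: nat
  shows "has_deficiency (a+L+s) (Qkr (a+L+s) (int a - int s) (int (a+L))) (int a - int s + int L - int (L mod 2))"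
proof -
  define Q where "Q = Qkr (a+L+s) (int a - int s) (int (a+L))"
  define c where "c = chat (a+L+s) (int a - int s) (int (a+L))"
  define N where "N = 2 * a+L"
  define pr where "pr = L mod 2"
  define d where "d = 2 * s + pr"
  have actQ: "act Q (poly p) = poly (Phi c N p)" for p
    unfolding Q_def c_def N_def by (rule act_Q)
  have supp: "c i = 0" if "i < int a \<or> int (a+L) < i" for i
    using that unfolding c_def chat_def by auto
  have Wwin: "Wseq e c i = (-1) powi i * FD e (poly (Pp s L)) (of_int i - real a)"
    if "int a - int s - 1 + int e \<le> i" "i \<le> int (a+L+s)" for e i
  proof -
    have base: "c i = (-1) powi i * (\<lambda>y. poly (Pp s L) (y + (- real a))) (of_int i)"
      if "int a - int s - 1 \<le> i" "i \<le> int (a+L+s)" for i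
      using chat_Pp[OF that] unfolding c_def by simp
    have "Wseq e c i = (-1) powi i * FD e (\<lambda>y. poly (Pp s L) (y + (- real a))) (of_int i)"
      by (rule Wseq_window[OF base]) (use that in auto)
    moreover have "FD e (\<lambda>y. poly (Pp s L) (y + (- real a))) (of_int i) = FD e (poly (Pp s L)) (of_int i + (- real a))"
      by (rule FD_shift)
    ultimately show ?thesis by simp
  qed
  have iter: "(pderiv ^^ e) (Phi c N p) = Phi (Wseq e c) (N + e) p" for e p
    by (rule Phi_iter[OF supp, of "int a" "int (a+L)"]) (auto simp: N_def)
  have wnat: "Wseq e c (int j') = (-1) ^ j' * FD e (poly (Pp s L)) (real j' - real a)"
    if "int a - int s - 1 + int e \<le> int j'" "int j' \<le> int (a+L+s)" for e j'
    using Wwin[OF that] by simp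
  have upper: "degree (Phi c N p) \<le> d" if dp: "degree p \<le> a+L+s" for p
  proof -
    define e where "e = Suc d"
    have "Phi (Wseq e c) (N + e) p = 0"
    proof (rule PhiVan[OF dp])
      fix j assume j: "j \<le> N + e" "j \<le> a+L+s" "N + e - j \<le> a+L+s"
      have w1: "Wseq e c (int j) = (-1) ^ j * FD e (poly (Pp s L)) (real j - real a)"
        by (rule wnat) (use j in \<open>auto simp: N_def\<close>)
      have w2: "Wseq e c (int (N + e - j)) = (-1) ^ (N + e - j) * FD e (poly (Pp s L)) (real (N + e - j) - real a)"
        by (rule wnat) (use j in \<open>auto simp: N_def\<close>)
      show "Wseq e c (int j) + Wseq e c (int (N + e - j)) = 0"
      proof (cases "even L")
        case False
        then have "e = Suc (Suc (2 * s))" unfolding e_def d_def pr_def by presburger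
        then show ?thesis using w1 w2 FD_Pp_over by simp
      next
        case True
        then have ee: "e = Suc (2 * s)" unfolding e_def d_def pr_def by presburger
        have "odd (N + e)" using True unfolding N_def ee by simp
        then have "(-1::real) ^ (N + e - j) = - ((-1) ^ j)" using neg1_pow_compl j by blast
        moreover have "FD e (poly (Pp s L)) (real (N + e - j) - real a) = FD e (poly (Pp s L)) (real j - real a)"
          unfolding ee by (rule FD_Pp_const)
        ultimately show ?thesis using w1 w2 by simp
      qed
    qed
    then have "(pderiv ^^ e) (Phi c N p) = 0" by (simp add: iter)
    then have "Phi c N p = 0 \<or> degree (Phi c N p) < e" using hpd_zero_degree by blast
    then show ?thesis unfolding e_def by auto
  qed
  define a0 where "a0 = a + s + (L + pr) div 2"
  have a0N: "2 * a0 = N + d" unfolding a0_def N_def d_def pr_def by presburger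
  have a0le: "a0 \<le> a+L+s" unfolding a0_def pr_def by presburger
  have Wa0: "Wseq d c (int a0) \<noteq> 0"
  proof -
    have i1: "int a - int s - 1 + int d \<le> int a0" unfolding a0_def d_def pr_def by presburger
    have "Wseq d c (int a0) = (-1) ^ a0 * FD d (poly (Pp s L)) (real a0 - real a)"
      by (rule wnat[OF i1]) (use a0le in simp)
    moreover have "FD d (poly (Pp s L)) (real a0 - real a) \<noteq> 0"
    proof (cases "even L")
      case True
      then have "d = 2 * s" "real a0 - real a = real L / 2 + real s"
        unfolding d_def a0_def pr_def by (auto simp: real_of_nat_div)
      then show ?thesis using FD_Pp_center[OF True] by simp
    next
      case False
      then have "d = Suc (2 * s)" unfolding d_def pr_def by presburger
      then show ?thesis using FD_Pp_odd by simp
    qed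
    ultimately show ?thesis by simp
  qed
  define p0 where "p0 = monom (1::real) a0"
  have dp0: "degree p0 = a0" by (simp add: p0_def degree_monom_eq)
  have "(pderiv ^^ d) (Phi c N p0) = smult (Wseq d c (int a0)) ([:fact a0:] * [:fact a0:])"
    using iter[of d p0] PhiMonom[of "Wseq d c" a0] a0N by (simp add: p0_def)
  also have "\<dots> \<noteq> 0" using Wa0 by simp
  finally have hd: "(pderiv ^^ d) (Phi c N p0) \<noteq> 0" .
  then have R0: "Phi c N p0 \<noteq> 0" by auto
  have dR0: "d \<le> degree (Phi c N p0)" using hpd_nonzero_degree[OF hd] .
  have mm: "int (a+L+s) - (int a - int s + int L - int (L mod 2)) = int d"
    unfolding d_def pr_def by simp
  show ?thesis
    unfolding has_deficiency_def Q_def[symmetric] mm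
  proof
    show "\<forall>p. degree p \<le> a + L + s \<longrightarrow> inP (int d) (act Q (poly p))"
      using upper by (auto simp: actQ inP_poly)
    show "\<not> (\<forall>p. degree p \<le> a + L + s \<longrightarrow> inP (int d - 1) (act Q (poly p)))"
    proof
      assume H: "\<forall>p. degree p \<le> a + L + s \<longrightarrow> inP (int d - 1) (act Q (poly p))"
      then have "inP (int d - 1) (poly (Phi c N p0))" using dp0 a0le actQ by auto
      then show False using R0 dR0 by (auto simp: inP_poly split: if_splits)
    qed
  qed
qed


lemma sum_fun_apply': "(sum F A) x = (\<Sum>a\<in>A. F a x)"
  by (induction A rule: infinite_finite_induct) auto

lemma opmod: "module opscale"
  by unfold_locales (auto simp: opscale_def fun_eq_iff algebra_simps)

definition Tc :: "nat \<Rightarrow> nat \<Rightarrow> nat \<Rightarrow> real" where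
  "Tc a L s = (if L = 0 then cf (a+L+s) (int a - int s) (int (a+L)) (int a)
      else cf (a+L+s) (int a - int s) (int (a+L)) (int a) + cf (a+L+s) (int a - int s) (int (a+L)) (int (a+L)))"

definition Mid :: "nat \<Rightarrow> nat \<Rightarrow> nat \<Rightarrow> (nat \<Rightarrow> real) \<Rightarrow> real" where
  "Mid a L s = (\<Sum>t\<in>{int a<..<int (a+L)}. opscale (cf (a+L+s) (int a - int s) (int (a+L)) t)
       (\<lambda>u. u (nat t) * u (nat (int (2*a+L) - t))))"

lemma Q_decomp:
  "Qkr (a+L+s) (int a - int s) (int (a+L)) = opscale (Tc a L s) (\<lambda>u. u (a+L) * u a) + Mid a L s"
proof (rule ext)
  fix u :: "nat \<Rightarrow> real"
  define c where "c = cf (a+L+s) (int a - int s) (int (a+L))"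
  define f where "f i = c i * u (nat i) * u (nat (int (2*a+L) - i))" for i
  have lo: "int a - int s + int (a+L+s) - int (a+L) = int a" by simp
  have Q1: "Qkr (a+L+s) (int a - int s) (int (a+L)) u = (\<Sum>i\<in>{int a..int (a+L)}. f i)"
    unfolding Qkr_cf lo f_def c_def by (intro sum.cong) auto
  have M1: "Mid a L s u = (\<Sum>i\<in>{int a<..<int (a+L)}. f i)"
    unfolding Mid_def sum_fun_apply' f_def c_def by (simp add: opscale_def mult.assoc)
  show "Qkr (a+L+s) (int a - int s) (int (a+L)) u = (opscale (Tc a L s) (\<lambda>u. u (a+L) * u a) + Mid a L s) u"
  proof (cases "L = 0")
    case True
    have "{int a<..<int (a+L)} = {}" using True by auto
    then have "Mid a L s u = 0" unfolding M1 by simp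
    then show ?thesis using True unfolding Q1 by (simp add: Tc_def opscale_def f_def c_def)
  next
    case False
    have S: "{int a..int (a+L)} = insert (int a) (insert (int (a+L)) {int a<..<int (a+L)})" using False by auto
    have "(\<Sum>i\<in>{int a..int (a+L)}. f i) = f (int a) + f (int (a+L)) + (\<Sum>i\<in>{int a<..<int (a+L)}. f i)"
      unfolding S using False by (simp add: add.assoc)
    moreover have "f (int a) + f (int (a+L)) = Tc a L s * (u (a+L) * u a)"
      using False unfolding f_def Tc_def c_def[symmetric] by (simp add: algebra_simps nat_int_add)
    ultimately show ?thesis unfolding Q1 by (simp add: M1 opscale_def)
  qed
qed

lemma Mid_noninv: "Mid a L s (u(a+L := x)) = Mid a L s u"
  unfolding Mid_def sum_fun_apply' opscale_def
  by (intro sum.cong refl) auto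

lemma cf_lo: "cf (a+L+s) (int a - int s) (int (a+L)) (int a) = (-1) ^ a * real ((L+s) choose s)"
proof -
  have n1: "nat (int (a+L+s) - int (a+L) + 1) = Suc s" by simp
  have n2: "nat (int (a+L+s) - int (a+L)) = s" by simp
  have "cf (a+L+s) (int a - int s) (int (a+L)) (int a) = (-1) ^ a * (real (Suc s) gchoose Suc s) * (real (L+s) gchoose s)"
    unfolding cf_def n1 n2 power_int_of_nat by (simp add: add.commute)
  then show ?thesis using binomial_gbinomial[of "L+s" s, where 'a=real] binomial_gbinomial[of "Suc s" "Suc s", where 'a=real] by simp
qed

lemma cf_hi: "cf (a+L+s) (int a - int s) (int (a+L)) (int (a+L)) = (-1) ^ (a+L) * real ((L+s+1) choose (s+1))"
proof -
  have n1: "nat (int (a+L+s) - int (a+L) + 1) = Suc s" by simp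
  have n2: "nat (int (a+L+s) - int (a+L)) = s" by simp
  have "cf (a+L+s) (int a - int s) (int (a+L)) (int (a+L)) = (-1) ^ (a+L) * (real (L+s+1) gchoose Suc s) * (real s gchoose s)"
    unfolding cf_def n1 n2 power_int_of_nat by (simp add: algebra_simps)
  then show ?thesis using binomial_gbinomial[of "L+s+1" "Suc s", where 'a=real] binomial_gbinomial[of s s, where 'a=real] by simp
qed

lemma Tc_nz: "Tc a L s \<noteq> 0"
proof (cases "L = 0")
  case True then show ?thesis using cf_lo[of a 0 s] by (simp add: Tc_def)
next
  case False
  have bb: "(L+s+1) choose (s+1) = ((L+s) choose s) + ((L+s) choose (s+1))" by simp
  have pos: "(L+s) choose (s+1) > 0" using False by (intro zero_less_binomial) simp
  have "Tc a L s = (-1)^a * (real ((L+s) choose s) + (-1)^L * real ((L+s+1) choose (s+1)))"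
    using False unfolding Tc_def cf_lo cf_hi by (simp add: power_add algebra_simps)
  moreover have "real ((L+s) choose s) + (-1)^L * real ((L+s+1) choose (s+1)) \<noteq> 0"
  proof (cases "even L")
    case True
    have "real ((L+s) choose s) + (-1)^L * real ((L+s+1) choose (s+1)) = real ((L+s) choose s) + real ((L+s+1) choose (s+1))"
      using True by simp
    moreover have "real ((L+s+1) choose (s+1)) > 0"
    proof -
      have "real ((L+s) choose (s+1)) > 0" using pos by simp
      moreover have "real ((L+s) choose s) \<ge> 0" by simp
      ultimately show ?thesis by (simp only: bb of_nat_add)
    qed
    ultimately show ?thesis by (smt (verit) of_nat_0_le_iff)
  next
    case False
    have "real ((L+s) choose s) + (-1)^L * real ((L+s+1) choose (s+1)) = - real ((L+s) choose (s+1))"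
      using False bb by simp
    then show ?thesis using pos by simp
  qed
  ultimately show ?thesis by simp
qed

lemma Q_involves: "involves (Qkr (a+L+s) (int a - int s) (int (a+L))) (a+L)"
proof -
  define u :: "nat \<Rightarrow> real" where "u = (if L = 0 then (\<lambda>j. 0) else (\<lambda>j. if j = a then 1 else 0))"
  have ua: "(u(a+L := 1)) a = 1" "u (a+L) = 0" by (auto simp: u_def)
  have "Qkr (a+L+s) (int a - int s) (int (a+L)) (u(a+L := 1)) - Qkr (a+L+s) (int a - int s) (int (a+L)) u
      = Tc a L s"
    using ua unfolding Q_decomp by (simp add: opscale_def Mid_noninv)
  then show ?thesis unfolding involves_def using Tc_nz by (metis eq_iff_diff_eq_0)
qed

lemma Q_noninv: "a+L < j \<Longrightarrow> \<not> involves (Qkr (a+L+s) (int a - int s) (int (a+L))) j"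
  unfolding involves_def Qkr_cf
  by (auto intro!: sum.cong)


lemma rmin_eq: "rmin n k = (int n + k + 1) div 2"
proof -
  have "\<lceil>real_of_int (int n + k) / 2\<rceil> = - \<lfloor>real_of_int (- (int n + k)) / real_of_int 2\<rfloor>"
    by (simp add: ceiling_def minus_divide_left)
  also have "\<dots> = - ((- (int n + k)) div 2)" by (simp only: floor_divide_of_int_eq)
  also have "\<dots> = (int n + k + 1) div 2" by presburger
  finally show ?thesis by (simp add: rmin_def)
qed

lemma param:
  assumes "- int n \<le> k" "rmin n k \<le> r" "r \<le> rmax n k"
  shows "\<exists>a L s. n = a+L+s \<and> k = int a - int s \<and> r = int (a+L)"
proof -
  have r1: "int n + k \<le> 2 * r" using assms(2) unfolding rmin_eq by presburger
  have r2: "r \<le> int n" "r \<le> int n + k" using assms(3) unfolding rmax_def by auto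
  show ?thesis
    by (rule exI[of _ "nat (k + int n - r)"], rule exI[of _ "nat (2 * r - int n - k)"], rule exI[of _ "nat (int n - r)"])
       (use r1 r2 in auto)
qed

lemma defic_eq:
  "int a - int s + 2 * (int (a+L) - rmin (a+L+s) (int a - int s)) = int a - int s + int L - int (L mod 2)"
  unfolding rmin_eq by presburger

lemma noninv_zero: "\<not> involves (\<lambda>u. 0) j"
  by (simp add: involves_def)

lemma noninv_sum: "(\<And>x. x \<in> A \<Longrightarrow> \<not> involves (F x) j) \<Longrightarrow> \<not> involves (sum F A) j"
  unfolding involves_def sum_fun_apply' by (auto intro!: sum.cong)

lemma noninv_scale: "\<not> involves T j \<Longrightarrow> \<not> involves (opscale c T) j"
  unfolding involves_def opscale_def by auto

lemma inv_add: "involves T j \<Longrightarrow> \<not> involves S j \<Longrightarrow> c \<noteq> 0 \<Longrightarrow> involves (opscale c T + S) j"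
  unfolding involves_def opscale_def by auto

lemma Q_in_span:
  assumes "0 \<le> k + int n - r" "r \<le> int n"
  shows "Qkr n k r \<in> Qspace n k"
proof -
  define Gs :: "jetop set" where "Gs = {(\<lambda>u. u i * u j) | i j. i \<le> n \<and> j \<le> n \<and> int i + int j = int n + k}"
  have "Qkr n k r = (\<Sum>i\<in>{k + int n - r .. r}. opscale (cf n k r i) (\<lambda>u. u (nat i) * u (nat (int n + k - i))))"
    by (rule ext) (simp add: Qkr_cf sum_fun_apply' opscale_def mult.assoc)
  also have "\<dots> \<in> module.span opscale Gs"
  proof (rule module.span_sum[OF opmod])
    fix i assume i: "i \<in> {k + int n - r .. r}"
    have "(\<lambda>u. u (nat i) * u (nat (int n + k - i))) \<in> Gs"
      unfolding Gs_def using i assms by (intro CollectI exI[of _ "nat i"] exI[of _ "nat (int n + k - i)"]) auto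
    then show "opscale (cf n k r i) (\<lambda>u. u (nat i) * u (nat (int n + k - i))) \<in> module.span opscale Gs"
      by (intro module.span_scale[OF opmod] module.span_base[OF opmod])
  qed
  finally show ?thesis unfolding Qspace_def Gs_def .
qed


lemma per_r:
  assumes "- int n \<le> k" "rmin n k \<le> r" "r \<le> rmax n k"
  shows "Qkr n k r \<noteq> (\<lambda>u. 0) \<and> Qkr n k r \<in> Qspace n k
          \<and> involves (Qkr n k r) (nat r) \<and> (\<forall>j. int j > r \<longrightarrow> \<not> involves (Qkr n k r) j)
          \<and> has_deficiency n (Qkr n k r) (k + 2 * (r - rmin n k))"
proof -
  obtain a L s where e: "n = a+L+s" "k = int a - int s" "r = int (a+L)" using param[OF assms] by blast
  have inv: "involves (Qkr n k r) (nat r)" unfolding e nat_int by (rule Q_involves)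
  have ni: "\<forall>j. int j > r \<longrightarrow> \<not> involves (Qkr n k r) j" unfolding e using Q_noninv by auto
  have nz: "Qkr n k r \<noteq> (\<lambda>u. 0)" using inv noninv_zero by metis
  have sp: "Qkr n k r \<in> Qspace n k" by (rule Q_in_span) (auto simp: e)
  have df: "has_deficiency n (Qkr n k r) (k + 2 * (r - rmin n k))"
    unfolding e defic_eq by (rule core_def)
  show ?thesis using inv ni nz sp df by blast
qed

lemma Q_inj:
  assumes "- int n \<le> k"
  shows "inj_on (Qkr n k) {rmin n k .. rmax n k}"
proof (rule inj_onI)
  fix r1 r2 assume r1: "r1 \<in> {rmin n k .. rmax n k}" and r2: "r2 \<in> {rmin n k .. rmax n k}"
    and eq: "Qkr n k r1 = Qkr n k r2"
  show "r1 = r2"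
  proof (rule ccontr)
    assume "r1 \<noteq> r2"
    then consider "r1 < r2" | "r2 < r1" by linarith
    then show False
    proof cases
      case 1
      have "involves (Qkr n k r2) (nat r2)" using per_r[OF assms] r2 by auto
      moreover have "\<not> involves (Qkr n k r1) (nat r2)" using per_r[OF assms, of r1] r1 r2 1 by auto
      ultimately show False using eq by simp
    next
      case 2
      have "involves (Qkr n k r1) (nat r1)" using per_r[OF assms] r1 by auto
      moreover have "\<not> involves (Qkr n k r2) (nat r1)" using per_r[OF assms, of r2] r1 r2 2 by auto
      ultimately show False using eq by simp
    qed
  qed
qed

lemma Q_indep:
  assumes "- int n \<le> k"
  shows "\<not> opdependent (Qkr n k ` {rmin n k .. rmax n k})"
proof
  assume "opdependent (Qkr n k ` {rmin n k .. rmax n k})"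
  then obtain t U where t: "finite t" "t \<subseteq> Qkr n k ` {rmin n k .. rmax n k}"
    and s0: "(\<Sum>v\<in>t. opscale (U v) v) = 0" and ex: "\<exists>v\<in>t. U v \<noteq> 0"
    unfolding module.dependent_explicit[OF opmod] by blast
  define R where "R = {r \<in> {rmin n k .. rmax n k}. Qkr n k r \<in> t \<and> U (Qkr n k r) \<noteq> 0}"
  have fR: "finite R" unfolding R_def by (rule finite_subset[of _ "{rmin n k .. rmax n k}"]) auto
  obtain v0 where v0: "v0 \<in> t" "U v0 \<noteq> 0" using ex by blast
  then obtain r0 where "r0 \<in> {rmin n k .. rmax n k}" "v0 = Qkr n k r0" using t by auto
  then have "r0 \<in> R" unfolding R_def using v0 by auto
  then have neR: "R \<noteq> {}" by auto
  define rM where "rM = Max R"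
  have rM: "rM \<in> R" unfolding rM_def using fR neR by simp
  have rMmax: "r \<le> rM" if "r \<in> R" for r unfolding rM_def using fR that by simp
  define T where "T = Qkr n k rM"
  have Tt: "T \<in> t" "U T \<noteq> 0" using rM unfolding R_def T_def by auto
  have Tinv: "involves T (nat rM)" using rM per_r[OF assms] unfolding R_def T_def by auto
  have rest: "\<not> involves (\<Sum>v\<in>t - {T}. opscale (U v) v) (nat rM)"
  proof (rule noninv_sum)
    fix v assume v: "v \<in> t - {T}"
    show "\<not> involves (opscale (U v) v) (nat rM)"
    proof (cases "U v = 0")
      case True
      then have "opscale (U v) v = (\<lambda>u. 0)" by (simp add: opscale_def)
      then show ?thesis using noninv_zero by simp
    next
      case False
      obtain r where r: "r \<in> {rmin n k .. rmax n k}" "v = Qkr n k r" using v t by auto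
      then have "r \<in> R" unfolding R_def using v False by auto
      then have "r \<le> rM" by (rule rMmax)
      moreover have "r \<noteq> rM" using r v unfolding T_def by auto
      ultimately have "r < rM" by simp
      moreover have "0 \<le> rM" using rM unfolding R_def rmin_eq using assms by auto
      ultimately have "\<not> involves v (nat rM)" using per_r[OF assms] r by auto
      then show ?thesis by (rule noninv_scale)
    qed
  qed
  have "(\<Sum>v\<in>t. opscale (U v) v) = opscale (U T) T + (\<Sum>v\<in>t - {T}. opscale (U v) v)"
    using t(1) Tt(1) by (simp add: sum.remove)
  then have "involves (\<Sum>v\<in>t. opscale (U v) v) (nat rM)"
    using inv_add[OF Tinv rest Tt(2)] by simp
  then show False using s0 noninv_zero by (simp add: zero_fun_def)
qed


lemma Q_span_eq:
  assumes "- int n \<le> k"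
  shows "opspan (Qkr n k ` {rmin n k .. rmax n k}) = Qspace n k"
proof -
  define Img where "Img = Qkr n k ` {rmin n k .. rmax n k}"
  define Gs :: "jetop set" where "Gs = {(\<lambda>u. u i * u j) | i j. i \<le> n \<and> j \<le> n \<and> int i + int j = int n + k}"
  have Qs: "Qspace n k = opspan Gs" by (simp add: Qspace_def Gs_def)
  have sub1: "opspan Img \<subseteq> opspan Gs"
  proof (rule module.span_minimal[OF opmod])
    show "Img \<subseteq> opspan Gs" unfolding Img_def using per_r[OF assms] Qs by auto
    show "module.subspace opscale (opspan Gs)" by (rule module.subspace_span[OF opmod])
  qed
  have mono: "\<forall>i j. max i j = m \<longrightarrow> i \<le> n \<longrightarrow> j \<le> n \<longrightarrow> int i + int j = int n + k \<longrightarrow> (\<lambda>u. u i * u j) \<in> opspan Img" for m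
  proof (induction m rule: less_induct)
    case (less m)
    have key: "(\<lambda>u. u i * u j) \<in> opspan Img"
      if h: "j \<le> i" "i = m" "i \<le> n" "int i + int j = int n + k" for i j
    proof -
      have rr: "rmin n k \<le> int i" "int i \<le> rmax n k"
        using h unfolding rmin_eq rmax_def by auto
      obtain a L s where e: "n = a+L+s" "k = int a - int s" "int i = int (a+L)"
        using param[OF assms rr] by blast
      have ia: "i = a + L" using e by simp
      have ja: "j = a" using e h by simp
      have Qin: "Qkr n k (int i) \<in> opspan Img"
        unfolding Img_def using rr by (intro module.span_base[OF opmod]) auto
      have Midin: "Mid a L s \<in> opspan Img"
        unfolding Mid_def
      proof (intro module.span_sum[OF opmod] module.span_scale[OF opmod])
        fix t assume t: "t \<in> {int a<..<int (a + L)}"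
        define i' where "i' = nat t"
        define j' where "j' = nat (int (2 * a + L) - t)"
        have "max i' j' < m" "i' \<le> n" "j' \<le> n" "int i' + int j' = int n + k"
          using t h e unfolding i'_def j'_def by auto
        then show "(\<lambda>u. u (nat t) * u (nat (int (2 * a + L) - t))) \<in> opspan Img"
          using less.IH unfolding i'_def j'_def by blast
      qed
      have eq: "(\<lambda>u. u i * u j) = opscale (1 / Tc a L s) (Qkr n k (int i) - Mid a L s)"
      proof (rule ext)
        fix u :: "nat \<Rightarrow> real"
        have "Qkr n k (int i) u - Mid a L s u = Tc a L s * (u i * u j)"
          unfolding e ia ja Q_decomp by (simp add: opscale_def)
        then show "u i * u j = opscale (1 / Tc a L s) (Qkr n k (int i) - Mid a L s) u"
          using Tc_nz[of a L s] by (simp add: opscale_def)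
      qed
      show ?thesis unfolding eq
        by (intro module.span_scale[OF opmod] module.span_diff[OF opmod] Qin Midin)
    qed
    show ?case
    proof (intro allI impI)
      fix i j assume h: "max i j = m" "i \<le> n" "j \<le> n" "int i + int j = int n + k"
      show "(\<lambda>u. u i * u j) \<in> opspan Img"
      proof (cases "j \<le> i")
        case True then show ?thesis using key h by auto
      next
        case False
        have "(\<lambda>u. u j * u i) \<in> opspan Img" using key[of i j] False h by (intro key) auto
        moreover have "(\<lambda>u. u j * u i) = (\<lambda>u. u i * u (j::nat) :: real)" by (auto simp: mult.commute)
        ultimately show ?thesis by simp
      qed
    qed
  qed
  have sub2: "opspan Gs \<subseteq> opspan Img"
  proof (rule module.span_minimal[OF opmod])
    show "Gs \<subseteq> opspan Img" unfolding Gs_def using mono by blast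
    show "module.subspace opscale (opspan Img)" by (rule module.subspace_span[OF opmod])
  qed
  show ?thesis using sub1 sub2 Qs unfolding Img_def by auto
qed

theorem mainTheorem1:
  fixes n :: nat and k :: int
  assumes "n \<ge> 1" and "- int n \<le> k" and "k \<le> int n"
  shows "(\<forall>r. rmin n k \<le> r \<and> r \<le> rmax n k \<longrightarrow>
            Qkr n k r \<noteq> (\<lambda>u. 0) \<and> Qkr n k r \<in> Qspace n k
          \<and> involves (Qkr n k r) (nat r) \<and> (\<forall>j. int j > r \<longrightarrow> \<not> involves (Qkr n k r) j)
          \<and> has_deficiency n (Qkr n k r) (k + 2 * (r - rmin n k)))
       \<and> inj_on (Qkr n k) {rmin n k .. rmax n k}
       \<and> \<not> opdependent (Qkr n k ` {rmin n k .. rmax n k})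
       \<and> opspan (Qkr n k ` {rmin n k .. rmax n k}) = Qspace n k"
  using per_r[OF assms(2)] Q_inj[OF assms(2)] Q_indep[OF assms(2)] Q_span_eq[OF assms(2)] by blast

end
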